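(* In the Nakagami model with parameters $L_c>0$, $L_s>0$, the distortion exponent achievable by the joint decoding scheme with rate $R_j=\frac{r_j}{2}\log_2\rho$, $$\Delta_j(L_s,L_c):=\sup_{r_j>0}\ \lim_{\rho\to\infty}-\frac{\log ED_j\big(\tfrac{r_j}{2}\log_2\rho\big)}{\log\rho},$$ equals $$\Delta_j(L_s,L_c)=\begin{cases}1-\dfrac{(1-L_s)^2}{L_c+1-L_s}&\text{if }L_s\le1,\\[2mm] 2-\dfrac1{L_s}&\text{if }1<L_s\le1+L_c,\\[2mm] 1+\dfrac{L_c}{L_c+1}&\text{if }L_s>1+L_c.\end{cases}$$
   Context: Nakagami model: for SNR $\rho>0$, the channel gain is $H=\rho H_0$ and the side-information gain is $\Gamma=\rho\Gamma_0$, where $H_0,\Gamma_0$ are independent, $H_0$ is Gamma distributed with shape $L_c$ and scale $1/L_c$, and $\Gamma_0$ is Gamma distributed with shape $L_s$ and scale $1/L_s$ (Gamma$(L,\theta)$ density $\frac{1}{\theta^L\Gamma(L)}x^{L-1}e^{-x/\theta}$, $x\ge0$). Define $D_d(R,\gamma)=(\gamma+2^{2R})^{-1}$. For $R_j>0$, the JDS outage set is $\mathcal O_j=\{(h,\gamma):\tfrac12\log_2(1+\tfrac{2^{2R_j}-1}{\gamma+1})\ge\tfrac12\log_2(1+h)\}$ and $ED_j(R_j)=\mathrm E[D_d(R_j,\Gamma)\mathbf 1\{(H,\Gamma)\notin\mathcal O_j\}]+\mathrm E[D_d(0,\Gamma)\mathbf 1\{(H,\Gamma)\in\mathcal O_j\}]$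 (a function of $\rho$ through $H,\Gamma$). *)

theory Defs
  imports "HOL-Analysis.Analysis"
begin

definition gamma_density :: "real \<Rightarrow> real \<Rightarrow> real \<Rightarrow> real" where
  "gamma_density L \<theta> x =
     (if 0 \<le> x then x powr (L - 1) * exp (- x / \<theta>) / (\<theta> powr L * Gamma L) else 0)"

definition D_d :: "real \<Rightarrow> real \<Rightarrow> real" where
  "D_d R \<gamma> = 1 / (\<gamma> + 2 powr (2 * R))"

definition outage_j :: "real \<Rightarrow> (real \<times> real) set" where
  "outage_j Rj = {(h, \<gamma>). 1/2 * log 2 (1 + (2 powr (2 * Rj) - 1) / (\<gamma> + 1)) \<ge> 1/2 * log 2 (1 + h)}"

text \<open>Expected distortion ED_j(R_j) at SNR rho in the Nakagami model:
  H = rho * H0, Gamma = rho * Gamma0 with H0 ~ Gamma(Lc, 1/Lc), Gamma0 ~ Gamma(Ls, 1/Ls)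
  independent; the expectation is the integral against the product density.\<close>
definition ED_j :: "real \<Rightarrow> real \<Rightarrow> real \<Rightarrow> real \<Rightarrow> real" where
  "ED_j Ls Lc Rj \<rho> =
     (\<integral>z. (case z of (h0, g0) \<Rightarrow>
         gamma_density Lc (1 / Lc) h0 * gamma_density Ls (1 / Ls) g0 *
         (D_d Rj (\<rho> * g0) * indicator (- outage_j Rj) (\<rho> * h0, \<rho> * g0)
          + D_d 0 (\<rho> * g0) * indicator (outage_j Rj) (\<rho> * h0, \<rho> * g0)))
      \<partial>(lborel \<Otimes>\<^sub>M lborel))"

definition Delta_formula :: "real \<Rightarrow> real \<Rightarrow> real" where
  "Delta_formula Ls Lc =
     (if Ls \<le> 1 then 1 - (1 - Ls)\<^sup>2 / (Lc + 1 - Ls)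
      else if Ls \<le> 1 + Lc then 2 - 1 / Ls
      else 1 + Lc / (Lc + 1))"

end

theory Submission
  imports Defs "HOL-Real_Asymp.Real_Asymp"
begin


abbreviation gd :: "real \<Rightarrow> real \<Rightarrow> real" where "gd L x \<equiv> gamma_density L (1/L) x"

definition KL :: "real \<Rightarrow> real" where "KL L = 1 / ((1/L) powr L * Gamma L)"

lemma KL_pos: "L > 0 \<Longrightarrow> KL L > 0"
  unfolding KL_def using Gamma_real_pos[of L] by (auto intro!: divide_pos_pos mult_pos_pos)

lemma gd_form: "L > 0 \<Longrightarrow> x > 0 \<Longrightarrow> gd L x = KL L * x powr (L - 1) * exp (- (L * x))"
  unfolding gamma_density_def KL_def by (simp add: field_simps)

lemma gd_nonpos: "x \<le> 0 \<Longrightarrow> gd L x = 0"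
  unfolding gamma_density_def by auto

lemma gd_nonneg: "L > 0 \<Longrightarrow> gd L x \<ge> 0"
proof (cases "x > 0")
  case True
  assume L: "L > 0" thus ?thesis using gd_form[OF L True] KL_pos[OF L]
    by (auto intro!: mult_nonneg_nonneg)
qed (simp add: gd_nonpos)

lemma gd_meas[measurable]: "gamma_density L t \<in> borel_measurable borel"
  unfolding gamma_density_def by measurable

definition kL :: "real \<Rightarrow> real" where "kL L = KL L * exp (- L) * min 1 (2 powr (1 - L))"

lemma kL_pos: "L > 0 \<Longrightarrow> kL L > 0"
  unfolding kL_def using KL_pos by auto

lemma gd_lower:
  assumes L: "L > 0" and x1: "0 < x1" "x1 \<le> 1" and x: "x1/2 \<le> x" "x \<le> x1"
  shows "gd L x \<ge> kL L * x1 powr (L - 1)"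
proof -
  have xp: "x > 0" using x x1 by auto
  have e: "exp (- (L * x)) \<ge> exp (-L)" using L x x1 by (simp add: mult_left_le)
  have p: "x powr (L - 1) \<ge> x1 powr (L - 1) * min 1 (2 powr (1 - L))"
  proof (cases "L \<ge> 1")
    case True
    have "x powr (L - 1) \<ge> (x1/2) powr (L - 1)" using True x x1 by (intro powr_mono2) auto
    also have "(x1/2) powr (L - 1) = x1 powr (L - 1) / 2 powr (L - 1)"
      using x1 by (simp add: powr_divide)
    also have "\<dots> = x1 powr (L - 1) * 2 powr (1 - L)"
      using powr_minus_divide[of 2 "L - 1"] by (simp add: divide_inverse)
    finally have "x powr (L - 1) \<ge> x1 powr (L - 1) * 2 powr (1 - L)" .
    moreover have "x1 powr (L - 1) * min 1 (2 powr (1 - L)) \<le> x1 powr (L - 1) * 2 powr (1 - L)"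
      by (intro mult_left_mono) auto
    ultimately show ?thesis by linarith
  next
    case False
    have "x powr (L - 1) \<ge> x1 powr (L - 1)" using False x x1 xp by (intro powr_mono2') auto
    moreover have "x1 powr (L - 1) * min 1 (2 powr (1 - L)) \<le> x1 powr (L - 1) * 1"
      by (intro mult_left_mono) auto
    ultimately show ?thesis by linarith
  qed
  have "gd L x = KL L * x powr (L - 1) * exp (- (L * x))" using gd_form[OF L xp] .
  also have "\<dots> \<ge> KL L * (x1 powr (L - 1) * min 1 (2 powr (1 - L))) * exp (-L)"
    using KL_pos[OF L] p e by (intro mult_mono) auto
  finally show ?thesis unfolding kL_def by (simp add: algebra_simps)
qed

lemma box_lower:
  assumes L: "L > 0" and x1: "0 < x1" "x1 \<le> 1"
  shows "(\<integral>\<^sup>+x. ennreal (indicator {x1/2..x1} x * gd L x) \<partial>lborel) \<ge> ennreal (kL L / 2 * x1 powr L)"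
proof -
  have "(\<integral>\<^sup>+x. ennreal (indicator {x1/2..x1} x * gd L x) \<partial>lborel) \<ge>
        (\<integral>\<^sup>+x. ennreal (kL L * x1 powr (L - 1)) * indicator {x1/2..x1} x \<partial>lborel)"
    using gd_lower[OF L x1] by (intro nn_integral_mono) (auto split: split_indicator intro!: ennreal_leI)
  also have "(\<integral>\<^sup>+x. ennreal (kL L * x1 powr (L - 1)) * indicator {x1/2..x1} x \<partial>lborel)
     = ennreal (kL L * x1 powr (L - 1)) * ennreal (x1/2)"
    using x1 by (subst nn_integral_cmult_indicator) auto
  also have "\<dots> = ennreal (kL L / 2 * x1 powr L)"
  proof -
    have "x1 powr (L - 1) * x1 = x1 powr L" using x1 by (simp add: powr_diff)
    hence e1: "kL L * x1 powr (L - 1) * (x1/2) = kL L / 2 * x1 powr L" by (simp add: algebra_simps)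
    have e2: "ennreal (kL L * x1 powr (L - 1)) * ennreal (x1 / 2) = ennreal (kL L * x1 powr (L - 1) * (x1/2))"
      by (rule ennreal_mult[symmetric]) (use x1 kL_pos[OF L] in auto)
    show ?thesis by (simp only: e1 e2)
  qed
  finally show ?thesis .
qed



lemma moment_fin:
  assumes L: "L > 0" and t: "\<tau> > - L"
  shows "(\<integral>\<^sup>+x. ennreal (gd L x * x powr \<tau>) \<partial>lborel) < \<infinity>"
proof -
  define s where "s = L + \<tau>"
  have s: "s > 0" using t by (simp add: s_def)
  define f where "f x = ennreal (KL L * (indicator {0..} x * x powr (s - 1) / exp (L * x)))" for x
  have eq: "(\<integral>\<^sup>+x. ennreal (gd L x * x powr \<tau>) \<partial>lborel) = (\<integral>\<^sup>+x. f x \<partial>lborel)"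
  proof (rule nn_integral_cong)
    fix x :: real
    show "ennreal (gd L x * x powr \<tau>) = f x"
    proof (cases "x > 0")
      case True
      have "x powr (L - 1) * x powr \<tau> = x powr (s - 1)" using True
        by (simp add: powr_add[symmetric] s_def algebra_simps)
      hence "gd L x * x powr \<tau> = KL L * (indicator {0..} x * x powr (s - 1) / exp (L * x))"
        using True by (simp add: gd_form[OF L True] exp_minus field_simps)
      thus ?thesis by (simp add: f_def)
    next
      case False
      thus ?thesis by (cases "x = 0") (auto simp: f_def gd_nonpos indicator_def)
    qed
  qed
  have meas[measurable]: "f \<in> borel_measurable borel" unfolding f_def by measurable
  have "(\<integral>\<^sup>+x. f x \<partial>lborel) = ennreal \<bar>1/L\<bar> * (\<integral>\<^sup>+x. f (0 + 1/L * x) \<partial>lborel)"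
    using nn_integral_real_affine[OF meas, of "1/L" 0] L by simp
  also have "(\<integral>\<^sup>+x. f (0 + 1/L * x) \<partial>lborel) =
      (\<integral>\<^sup>+x. ennreal (KL L * L powr (1 - s)) * ennreal (indicator {0..} x * x powr (s - 1) / exp x) \<partial>lborel)"
  proof (rule nn_integral_cong)
    fix x :: real
    show "f (0 + 1/L * x) = ennreal (KL L * L powr (1 - s)) * ennreal (indicator {0..} x * x powr (s - 1) / exp x)"
    proof (cases "x \<ge> 0")
      case True
      have "(x / L) powr (s - 1) = x powr (s - 1) / L powr (s - 1)" using True L by (simp add: powr_divide)
      also have "\<dots> = L powr (1 - s) * x powr (s - 1)"
        using powr_minus_divide[of L "s - 1"] by (simp add: divide_inverse)
      finally have pw: "(x / L) powr (s - 1) = L powr (1 - s) * x powr (s - 1)" .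
      have "f (0 + 1/L * x) = ennreal (KL L * L powr (1 - s) * (x powr (s - 1) / exp x))"
        using True L by (simp add: f_def pw mult.assoc)
      also have "\<dots> = ennreal (KL L * L powr (1 - s)) * ennreal (indicator {0..} x * x powr (s - 1) / exp x)"
      proof -
        have r: "KL L * L powr (1 - s) * (x powr (s - 1) / exp x) = KL L * L powr (1 - s) * (indicator {0..} x * x powr (s - 1) / exp x)"
          using True by simp
        show ?thesis unfolding r by (rule ennreal_mult) (use True KL_pos[OF L] in auto)
      qed
      finally show ?thesis .
    next
      case False
      thus ?thesis using L by (simp add: f_def indicator_def zero_le_divide_iff)
    qed
  qed
  also have "\<dots> = ennreal (KL L * L powr (1 - s)) * ennreal (Gamma s)"
    by (subst nn_integral_cmult) (auto simp: Gamma_conv_nn_integral_real[OF s])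
  finally show ?thesis using eq by (simp add: ennreal_mult_less_top)
qed

lemma moment0_fin:
  assumes L: "L > 0"
  shows "(\<integral>\<^sup>+x. ennreal (gd L x) \<partial>lborel) < \<infinity>"
proof -
  have "(\<integral>\<^sup>+x. ennreal (gd L x) \<partial>lborel) = (\<integral>\<^sup>+x. ennreal (gd L x * x powr 0) \<partial>lborel)"
    by (rule nn_integral_cong) (auto simp: gd_nonpos)
  thus ?thesis using moment_fin[OF L, of 0] L by simp
qed

definition mom :: "real \<Rightarrow> real \<Rightarrow> real" where
  "mom L \<tau> = enn2real (\<integral>\<^sup>+x. ennreal (gd L x * x powr \<tau>) \<partial>lborel)"

lemma mom_eq: "L > 0 \<Longrightarrow> \<tau> > - L \<Longrightarrow> (\<integral>\<^sup>+x. ennreal (gd L x * x powr \<tau>) \<partial>lborel) = ennreal (mom L \<tau>)"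
  unfolding mom_def using moment_fin[of L \<tau>] by (intro ennreal_enn2real[symmetric]) auto

lemma mom_nonneg: "mom L \<tau> \<ge> 0" unfolding mom_def by simp

definition Wf :: "real \<Rightarrow> real \<Rightarrow> real \<Rightarrow> real \<Rightarrow> real" where
  "Wf R \<rho> h g = D_d R (\<rho>*g) * indicator (- outage_j R) (\<rho>*h, \<rho>*g) + D_d 0 (\<rho>*g) * indicator (outage_j R) (\<rho>*h, \<rho>*g)"

lemma outage_iff:
  assumes "h \<ge> 0" "\<gamma> \<ge> 0" "2 powr (2*R) \<ge> 1"
  shows "(h, \<gamma>) \<in> outage_j R \<longleftrightarrow> h * (\<gamma> + 1) \<le> 2 powr (2*R) - 1"
proof -
  let ?s = "2 powr (2*R)"
  have X: "0 < 1 + (?s - 1) / (\<gamma> + 1)" using assms by (smt (verit) divide_nonneg_pos)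
  have "(h, \<gamma>) \<in> outage_j R \<longleftrightarrow> log 2 (1 + h) \<le> log 2 (1 + (?s - 1) / (\<gamma> + 1))"
    unfolding outage_j_def by auto
  also have "\<dots> \<longleftrightarrow> 1 + h \<le> 1 + (?s - 1) / (\<gamma> + 1)"
    using X assms by (intro log_le_cancel_iff) auto
  also have "\<dots> \<longleftrightarrow> h * (\<gamma> + 1) \<le> ?s - 1"
    using assms by (simp add: pos_le_divide_eq)
  finally show ?thesis .
qed

lemma W_cases:
  assumes "\<rho> > 0" "h \<ge> 0" "g \<ge> 0" "2 powr (2*R) \<ge> 1"
  shows "Wf R \<rho> h g = (if \<rho>*h*(\<rho>*g+1) \<le> 2 powr (2*R) - 1 then 1/(\<rho>*g+1) else 1/(\<rho>*g + 2 powr (2*R)))"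
proof -
  have "(\<rho>*h, \<rho>*g) \<in> outage_j R \<longleftrightarrow> \<rho>*h*(\<rho>*g+1) \<le> 2 powr (2*R) - 1"
    using assms by (intro outage_iff) auto
  thus ?thesis unfolding Wf_def D_d_def by (auto simp: indicator_def)
qed

lemma W_nonneg:
  assumes "\<rho> > 0" "h \<ge> 0" "g \<ge> 0" "2 powr (2*R) \<ge> 1"
  shows "Wf R \<rho> h g \<ge> 0"
  using W_cases[OF assms] assms by auto

lemma F_nonneg:
  assumes "Lc > 0" "Ls > 0" "\<rho> > 0" "2 powr (2*R) \<ge> 1"
  shows "gd Lc h * gd Ls g * Wf R \<rho> h g \<ge> 0"
proof (cases "h > 0 \<and> g > 0")
  case True
  thus ?thesis using assms W_nonneg[of \<rho> h g R] gd_nonneg[of Lc h] gd_nonneg[of Ls g]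
    by (auto intro!: mult_nonneg_nonneg)
next
  case False
  thus ?thesis by (auto simp: gd_nonpos)
qed

lemma outage_meas[measurable]: "outage_j R \<in> sets (borel \<Otimes>\<^sub>M borel)"
proof -
  define s where "s = 2 powr (2 * R)"
  have m1: "(\<lambda>z::real\<times>real. log 2 (1 + fst z)) \<in> borel_measurable (borel \<Otimes>\<^sub>M borel)" by measurable
  have m2: "(\<lambda>z::real\<times>real. log 2 (1 + (s - 1) / (snd z + 1))) \<in> borel_measurable (borel \<Otimes>\<^sub>M borel)" by measurable
  have "outage_j R = {z \<in> space (borel \<Otimes>\<^sub>M borel). log 2 (1 + fst z) \<le> log 2 (1 + (s - 1) / (snd z + 1))}"
    unfolding outage_j_def space_pair_measure space_borel s_def by (rule set_eqI) (simp add: split_beta)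
  also have "\<dots> \<in> sets (borel \<Otimes>\<^sub>M borel)" using m1 m2 by measurable
  finally show ?thesis .
qed
lemma outage_meas'[measurable]: "- outage_j R \<in> sets (borel \<Otimes>\<^sub>M borel)"
proof -
  have "- outage_j R = space (borel \<Otimes>\<^sub>M borel) - outage_j R" by (simp add: space_pair_measure Compl_eq_Diff_UNIV)
  thus ?thesis using outage_meas by (simp only: sets.compl_sets)
qed
lemma Wf_meas[measurable]: "(\<lambda>z. Wf R \<rho> (fst z) (snd z)) \<in> borel_measurable (lborel \<Otimes>\<^sub>M lborel)"
  unfolding Wf_def D_d_def by measurable

lemma ED_eq:
  assumes "Lc > 0" "Ls > 0" "\<rho> > 0" "2 powr (2*R) \<ge> 1"
  shows "ED_j Ls Lc R \<rho> = enn2real (\<integral>\<^sup>+z. ennreal (gd Lc (fst z) * gd Ls (snd z) * Wf R \<rho> (fst z) (snd z)) \<partial>(lborel \<Otimes>\<^sub>M lborel))"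
proof -
  have "(\<lambda>z. case z of (h0, g0) \<Rightarrow>
         gamma_density Lc (1 / Lc) h0 * gamma_density Ls (1 / Ls) g0 *
         (D_d R (\<rho> * g0) * indicator (- outage_j R) (\<rho> * h0, \<rho> * g0)
          + D_d 0 (\<rho> * g0) * indicator (outage_j R) (\<rho> * h0, \<rho> * g0)))
      = (\<lambda>z. gd Lc (fst z) * gd Ls (snd z) * Wf R \<rho> (fst z) (snd z))"
    by (rule ext) (simp only: Wf_def split_beta)
  hence "ED_j Ls Lc R \<rho> = (\<integral>z. gd Lc (fst z) * gd Ls (snd z) * Wf R \<rho> (fst z) (snd z) \<partial>(lborel \<Otimes>\<^sub>M lborel))"
    unfolding ED_j_def by simp
  also have "\<dots> = enn2real (\<integral>\<^sup>+z. ennreal (gd Lc (fst z) * gd Ls (snd z) * Wf R \<rho> (fst z) (snd z)) \<partial>(lborel \<Otimes>\<^sub>M lborel))"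
  proof -
    have meas: "(\<lambda>z. gd Lc (fst z) * gd Ls (snd z) * Wf R \<rho> (fst z) (snd z)) \<in> borel_measurable (lborel \<Otimes>\<^sub>M lborel)"
      by measurable
    show ?thesis by (rule integral_eq_nn_integral[OF meas]) (use F_nonneg[OF assms] in auto)
  qed
  finally show ?thesis .
qed

lemma prod_nn:
  fixes f g :: "real \<Rightarrow> ennreal"
  assumes [measurable]: "f \<in> borel_measurable borel" "g \<in> borel_measurable borel"
  shows "(\<integral>\<^sup>+z. f (fst z) * g (snd z) \<partial>(lborel \<Otimes>\<^sub>M lborel)) = (\<integral>\<^sup>+x. f x \<partial>lborel) * (\<integral>\<^sup>+y. g y \<partial>lborel)"
proof -
  have "(\<integral>\<^sup>+z. f (fst z) * g (snd z) \<partial>(lborel \<Otimes>\<^sub>M lborel)) = (\<integral>\<^sup>+ x. \<integral>\<^sup>+ y. f x * g y \<partial>lborel \<partial>lborel)"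
    by (subst lborel.nn_integral_fst[symmetric]) auto
  also have "\<dots> = (\<integral>\<^sup>+ x. f x * (\<integral>\<^sup>+ y. g y \<partial>lborel) \<partial>lborel)"
    by (simp add: nn_integral_cmult)
  also have "\<dots> = (\<integral>\<^sup>+x. f x \<partial>lborel) * (\<integral>\<^sup>+y. g y \<partial>lborel)"
    by (simp add: nn_integral_multc)
  finally show ?thesis .
qed



lemma UA:
  fixes \<rho> g s r \<theta> :: real
  assumes \<rho>: "\<rho> \<ge> 1" and g: "g > 0" and th: "0 \<le> \<theta>" "\<theta> \<le> 1" and s: "s = \<rho> powr r"
  shows "1 / (\<rho>*g + s) \<le> \<rho> powr (-(\<theta> + r*(1-\<theta>))) * g powr (-\<theta>)"
proof -
  have \<rho>0: "\<rho> > 0" using \<rho> by linarith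
  have sp: "s > 0" using s \<rho>0 by simp
  have lns: "ln s = r * ln \<rho>" using s \<rho>0 by (simp add: ln_powr)
  have l1: "ln (\<rho>*g + s) \<ge> ln \<rho> + ln g"
  proof -
    have pg: "\<rho>*g > 0" using \<rho>0 g by simp
    have "ln (\<rho>*g + s) \<ge> ln (\<rho>*g)" using sp pg by (subst ln_le_cancel_iff) auto
    thus ?thesis using \<rho>0 g by (simp add: ln_mult)
  qed
  have l2: "ln (\<rho>*g + s) \<ge> r * ln \<rho>"
  proof -
    have pg: "\<rho>*g > 0" using \<rho>0 g by simp
    have "ln (\<rho>*g + s) \<ge> ln s" using sp pg by (subst ln_le_cancel_iff) auto
    thus ?thesis using lns by simp
  qed
  have c: "\<theta> * (ln (\<rho>*g + s) - (ln \<rho> + ln g)) + (1 - \<theta>) * (ln (\<rho>*g + s) - r * ln \<rho>) \<ge> 0"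
    using l1 l2 th by (intro add_nonneg_nonneg mult_nonneg_nonneg) auto
  have pos: "\<rho>*g + s > 0" using sp \<rho>0 g by (simp add: add_pos_pos)
  have "1 / (\<rho>*g + s) = exp (- ln (\<rho>*g + s))" using pos
    by (simp add: exp_minus inverse_eq_divide)
  also have "\<dots> \<le> exp (-(\<theta> + r*(1-\<theta>)) * ln \<rho> + (-\<theta>) * ln g)"
    using c by (intro exp_le_cancel_iff[THEN iffD2]) (simp add: algebra_simps)
  also have "\<dots> = \<rho> powr (-(\<theta> + r*(1-\<theta>))) * g powr (-\<theta>)"
    using \<rho>0 g by (simp add: powr_def exp_add[symmetric] algebra_simps)
  finally show ?thesis .
qed

lemma UB:
  fixes \<rho> g h s r \<kappa> \<theta>' :: real
  assumes \<rho>: "\<rho> \<ge> 1" and h: "h > 0" and g: "g > 0" and s: "s = \<rho> powr r"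
    and k: "0 \<le> \<kappa>" and t: "0 \<le> \<theta>'" "\<theta>' \<le> 1 + \<kappa>"
    and out: "\<rho>*h*(\<rho>*g+1) \<le> s - 1"
  shows "1 / (\<rho>*g + 1) \<le> \<rho> powr (r*\<kappa> - \<kappa> - \<theta>') * h powr (-\<kappa>) * g powr (-\<theta>')"
proof -
  have \<rho>0: "\<rho> > 0" using \<rho> by linarith
  have sp: "s > 0" using s \<rho>0 by simp
  have lns: "ln s = r * ln \<rho>" using s \<rho>0 by (simp add: ln_powr)
  have pos: "\<rho>*h*(\<rho>*g+1) > 0" using \<rho>0 h g by (simp add: add_pos_nonneg)
  have "ln (\<rho>*h*(\<rho>*g+1)) \<le> ln s" using pos out by (subst ln_le_cancel_iff) auto
  moreover have "ln (\<rho>*h*(\<rho>*g+1)) = ln \<rho> + ln h + ln (\<rho>*g+1)"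
  proof -
    have pg1: "\<rho>*g+1 > 0" using \<rho>0 g by (simp add: add_pos_nonneg)
    have ph: "\<rho>*h > 0" using \<rho>0 h by simp
    show ?thesis using ph pg1 \<rho>0 h by (simp add: ln_mult)
  qed
  ultimately have T: "r * ln \<rho> - ln \<rho> - ln h - ln (\<rho>*g+1) \<ge> 0"
    using lns by simp
  have X0: "ln (\<rho>*g+1) \<ge> 0" using \<rho>0 g by simp
  have XY: "ln (\<rho>*g+1) \<ge> ln \<rho> + ln g"
  proof -
    have pg: "\<rho>*g > 0" using \<rho>0 g by simp
    have "ln (\<rho>*g+1) \<ge> ln (\<rho>*g)" using pg by (subst ln_le_cancel_iff) auto
    thus ?thesis using \<rho>0 g by (simp add: ln_mult)
  qed
  have Q: "(1+\<kappa>) * ln (\<rho>*g+1) \<ge> \<theta>' * (ln \<rho> + ln g)"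
  proof (cases "ln \<rho> + ln g \<ge> 0")
    case True
    have "\<theta>' * (ln \<rho> + ln g) \<le> (1+\<kappa>) * (ln \<rho> + ln g)" using True t by (intro mult_right_mono) auto
    also have "\<dots> \<le> (1+\<kappa>) * ln (\<rho>*g+1)" using XY k by (intro mult_left_mono) auto
    finally show ?thesis .
  next
    case False
    have "\<theta>' * (ln \<rho> + ln g) \<le> 0" using False t by (simp add: mult_nonneg_nonpos)
    also have "0 \<le> (1+\<kappa>) * ln (\<rho>*g+1)" using X0 k by simp
    finally show ?thesis .
  qed
  have kT: "\<kappa> * (r * ln \<rho> - ln \<rho> - ln h - ln (\<rho>*g+1)) \<ge> 0" using k T by simp
  have pos1: "\<rho>*g + 1 > 0" using \<rho>0 g by (simp add: add_pos_nonneg)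
  have "1 / (\<rho>*g + 1) = exp (- ln (\<rho>*g + 1))" using pos1
    by (simp add: exp_minus inverse_eq_divide)
  also have "\<dots> \<le> exp ((r*\<kappa> - \<kappa> - \<theta>') * ln \<rho> + (-\<kappa>) * ln h + (-\<theta>') * ln g)"
    using Q kT by (intro exp_le_cancel_iff[THEN iffD2]) (simp add: algebra_simps)
  also have "\<dots> = \<rho> powr (r*\<kappa> - \<kappa> - \<theta>') * h powr (-\<kappa>) * g powr (-\<theta>')"
    using \<rho>0 g h by (simp add: powr_def exp_add[symmetric] algebra_simps)
  finally show ?thesis .
qed

lemma F_upper:
  assumes Lc: "Lc > 0" and Ls: "Ls > 0" and \<rho>: "\<rho> \<ge> 1" and r: "r \<ge> 0"
    and s: "2 powr (2*R) = \<rho> powr r"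
    and th: "0 \<le> \<theta>" "\<theta> \<le> 1" and k: "0 \<le> \<kappa>" and t: "0 \<le> \<theta>'" "\<theta>' \<le> 1 + \<kappa>"
  shows "gd Lc h * gd Ls g * Wf R \<rho> h g \<le>
     \<rho> powr (-(\<theta> + r*(1-\<theta>))) * ((gd Lc h * h powr 0) * (gd Ls g * g powr (-\<theta>)))
   + \<rho> powr (r*\<kappa> - \<kappa> - \<theta>') * ((gd Lc h * h powr (-\<kappa>)) * (gd Ls g * g powr (-\<theta>')))"
    (is "?L \<le> ?A + ?B")
proof -
  have A0: "?A \<ge> 0" and B0: "?B \<ge> 0" using gd_nonneg[OF Lc, of h] gd_nonneg[OF Ls, of g]
    by (auto intro!: mult_nonneg_nonneg)
  show ?thesis
  proof (cases "h > 0 \<and> g > 0")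
    case False
    have "gd Lc h = 0 \<or> gd Ls g = 0" using False gd_nonpos by force
    hence L0: "?L = 0" by auto
    show ?thesis using A0 B0 L0 by linarith
  next
    case True
    hence h: "h > 0" and g: "g > 0" by auto
    have \<rho>0: "\<rho> > 0" using \<rho> by linarith
    have s1: "2 powr (2*R) \<ge> 1" using s \<rho> r by (simp add: ge_one_powr_ge_zero)
    have dens: "gd Lc h * gd Ls g \<ge> 0" using gd_nonneg[OF Lc, of h] gd_nonneg[OF Ls, of g] by simp
    have hp: "h powr 0 = 1" using h by simp
    show ?thesis
    proof (cases "\<rho>*h*(\<rho>*g+1) \<le> 2 powr (2*R) - 1")
      case True
      have W: "Wf R \<rho> h g = 1/(\<rho>*g+1)" using W_cases[OF \<rho>0 _ _ s1, of h g] h g True by simp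
      have "Wf R \<rho> h g \<le> \<rho> powr (r*\<kappa> - \<kappa> - \<theta>') * h powr (-\<kappa>) * g powr (-\<theta>')"
        unfolding W using UB[OF \<rho> h g s k t] True by simp
      hence "?L \<le> gd Lc h * gd Ls g * (\<rho> powr (r*\<kappa> - \<kappa> - \<theta>') * h powr (-\<kappa>) * g powr (-\<theta>'))"
        using dens by (intro mult_left_mono) auto
      also have "\<dots> = ?B" by (simp add: algebra_simps)
      finally show ?thesis using A0 by simp
    next
      case False
      have W: "Wf R \<rho> h g = 1/(\<rho>*g + 2 powr (2*R))" using W_cases[OF \<rho>0 _ _ s1, of h g] h g False by simp
      have "Wf R \<rho> h g \<le> \<rho> powr (-(\<theta> + r*(1-\<theta>))) * g powr (-\<theta>)"
        unfolding W using UA[OF \<rho> g th s] by simp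
      hence "?L \<le> gd Lc h * gd Ls g * (\<rho> powr (-(\<theta> + r*(1-\<theta>))) * g powr (-\<theta>))"
        using dens by (intro mult_left_mono) auto
      also have "\<dots> = ?A" using h by (simp add: algebra_simps)
      finally show ?thesis using B0 by simp
    qed
  qed
qed

lemma F_le_dens:
  assumes Lc: "Lc > 0" and Ls: "Ls > 0" and \<rho>: "\<rho> > 0" and s1: "2 powr (2*R) \<ge> 1"
  shows "gd Lc h * gd Ls g * Wf R \<rho> h g \<le> gd Lc h * gd Ls g"
proof (cases "h > 0 \<and> g > 0")
  case False
  thus ?thesis by (auto simp: gd_nonpos)
next
  case True
  have pg: "\<rho> * g \<ge> 0" using True \<rho> by simp
  have a1: "1/(\<rho>*g+1) \<le> 1" using pg by (simp add: field_simps)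
  have a2: "1/(\<rho>*g+2 powr (2*R)) \<le> 1" using pg s1 by (simp add: field_simps)
  have "Wf R \<rho> h g \<le> 1" using W_cases[OF \<rho> _ _ s1, of h g] True a1 a2 by auto
  thus ?thesis using gd_nonneg[OF Lc, of h] gd_nonneg[OF Ls, of g]
    by (simp add: mult_left_le)
qed

lemma F_meas[measurable]: "(\<lambda>z. gd Lc (fst z) * gd Ls (snd z) * Wf R \<rho> (fst z) (snd z)) \<in> borel_measurable (lborel \<Otimes>\<^sub>M lborel)"
  by measurable

lemma F_fin:
  assumes Lc: "Lc > 0" and Ls: "Ls > 0" and \<rho>: "\<rho> > 0" and s1: "2 powr (2*R) \<ge> 1"
  shows "(\<integral>\<^sup>+z. ennreal (gd Lc (fst z) * gd Ls (snd z) * Wf R \<rho> (fst z) (snd z)) \<partial>(lborel \<Otimes>\<^sub>M lborel)) < \<infinity>"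
proof -
  have "(\<integral>\<^sup>+z. ennreal (gd Lc (fst z) * gd Ls (snd z) * Wf R \<rho> (fst z) (snd z)) \<partial>(lborel \<Otimes>\<^sub>M lborel))
      \<le> (\<integral>\<^sup>+z. ennreal (gd Lc (fst z)) * ennreal (gd Ls (snd z)) \<partial>(lborel \<Otimes>\<^sub>M lborel))"
    using F_le_dens[OF assms] gd_nonneg[OF Lc] gd_nonneg[OF Ls]
    by (intro nn_integral_mono) (simp add: ennreal_mult[symmetric])
  also have "\<dots> = (\<integral>\<^sup>+x. ennreal (gd Lc x) \<partial>lborel) * (\<integral>\<^sup>+y. ennreal (gd Ls y) \<partial>lborel)"
    by (rule prod_nn) auto
  also have "\<dots> < \<infinity>" using moment0_fin[OF Lc] moment0_fin[OF Ls] by (simp add: ennreal_mult_less_top)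
  finally show ?thesis .
qed



lemma enn_comb:
  fixes a b c d e f :: real
  assumes "0\<le>a" "0\<le>b" "0\<le>c" "0\<le>d" "0\<le>e" "0\<le>f"
  shows "ennreal (a*(b*c) + d*(e*f)) = ennreal a * (ennreal b * ennreal c) + ennreal d * (ennreal e * ennreal f)"
  using assms by (simp add: ennreal_mult ennreal_plus)

lemma enn_comb3:
  fixes a b c :: real
  assumes "0\<le>a" "0\<le>b" "0\<le>c"
  shows "ennreal (a*(b*c)) = ennreal a * (ennreal b * ennreal c)"
  using assms by (simp add: ennreal_mult)

lemma gdp_meas[measurable]: "(\<lambda>x. ennreal (gd L x * x powr t)) \<in> borel_measurable borel"
  by measurable

lemma ED_upper:
  assumes Lc: "Lc > 0" and Ls: "Ls > 0" and \<rho>: "\<rho> \<ge> 1" and r: "r \<ge> 0"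
    and s: "2 powr (2*R) = \<rho> powr r"
    and th: "0 \<le> \<theta>" "\<theta> \<le> 1" "\<theta> < Ls" and k: "0 \<le> \<kappa>" "\<kappa> < Lc"
    and t: "0 \<le> \<theta>'" "\<theta>' \<le> 1 + \<kappa>" "\<theta>' < Ls"
  shows "ED_j Ls Lc R \<rho> \<le> \<rho> powr (-(\<theta> + r*(1-\<theta>))) * (mom Lc 0 * mom Ls (-\<theta>))
          + \<rho> powr (r*\<kappa> - \<kappa> - \<theta>') * (mom Lc (-\<kappa>) * mom Ls (-\<theta>'))"
proof -
  have \<rho>0: "\<rho> > 0" using \<rho> by linarith
  have s1: "2 powr (2*R) \<ge> 1" using s \<rho> r by (simp add: ge_one_powr_ge_zero)
  define pA where "pA = \<rho> powr (-(\<theta> + r*(1-\<theta>)))"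
  define pB where "pB = \<rho> powr (r*\<kappa> - \<kappa> - \<theta>')"
  define f1 where "f1 x = gd Lc x * x powr 0" for x
  define f2 where "f2 x = gd Ls x * x powr (-\<theta>)" for x
  define f3 where "f3 x = gd Lc x * x powr (-\<kappa>)" for x
  define f4 where "f4 x = gd Ls x * x powr (-\<theta>')" for x
  have nn: "f1 x \<ge> 0" "f2 x \<ge> 0" "f3 x \<ge> 0" "f4 x \<ge> 0" for x
    unfolding f1_def f2_def f3_def f4_def using gd_nonneg[OF Lc, of x] gd_nonneg[OF Ls, of x] by auto
  have pnn: "pA \<ge> 0" "pB \<ge> 0" unfolding pA_def pB_def by auto
  have [measurable]: "(\<lambda>x. ennreal (f1 x)) \<in> borel_measurable borel" unfolding f1_def by measurable
  have [measurable]: "(\<lambda>x. ennreal (f2 x)) \<in> borel_measurable borel" unfolding f2_def by measurable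
  have [measurable]: "(\<lambda>x. ennreal (f3 x)) \<in> borel_measurable borel" unfolding f3_def by measurable
  have [measurable]: "(\<lambda>x. ennreal (f4 x)) \<in> borel_measurable borel" unfolding f4_def by measurable
  have "(\<integral>\<^sup>+z. ennreal (gd Lc (fst z) * gd Ls (snd z) * Wf R \<rho> (fst z) (snd z)) \<partial>(lborel \<Otimes>\<^sub>M lborel))
     \<le> (\<integral>\<^sup>+z. ennreal pA * (ennreal (f1 (fst z)) * ennreal (f2 (snd z))) + ennreal pB * (ennreal (f3 (fst z)) * ennreal (f4 (snd z))) \<partial>(lborel \<Otimes>\<^sub>M lborel))"
  proof (rule nn_integral_mono)
    fix z :: "real \<times> real"
    have "gd Lc (fst z) * gd Ls (snd z) * Wf R \<rho> (fst z) (snd z) \<le> pA * (f1 (fst z) * f2 (snd z)) + pB * (f3 (fst z) * f4 (snd z))"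
      unfolding pA_def pB_def f1_def f2_def f3_def f4_def by (rule F_upper[OF Lc Ls \<rho> r s th(1,2) k(1) t(1,2)])
    hence "ennreal (gd Lc (fst z) * gd Ls (snd z) * Wf R \<rho> (fst z) (snd z)) \<le> ennreal (pA * (f1 (fst z) * f2 (snd z)) + pB * (f3 (fst z) * f4 (snd z)))"
      by (rule ennreal_leI)
    also have "\<dots> = ennreal pA * (ennreal (f1 (fst z)) * ennreal (f2 (snd z))) + ennreal pB * (ennreal (f3 (fst z)) * ennreal (f4 (snd z)))"
      using nn pnn by (intro enn_comb) auto
    finally show "ennreal (gd Lc (fst z) * gd Ls (snd z) * Wf R \<rho> (fst z) (snd z)) \<le> \<dots>" .
  qed
  also have "\<dots> = ennreal pA * ((\<integral>\<^sup>+x. ennreal (f1 x) \<partial>lborel) * (\<integral>\<^sup>+x. ennreal (f2 x) \<partial>lborel))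
      + ennreal pB * ((\<integral>\<^sup>+x. ennreal (f3 x) \<partial>lborel) * (\<integral>\<^sup>+x. ennreal (f4 x) \<partial>lborel))"
  proof -
    have m1: "(\<lambda>z. ennreal pA * (ennreal (f1 (fst z)) * ennreal (f2 (snd z)))) \<in> borel_measurable (lborel \<Otimes>\<^sub>M lborel)" by measurable
    have m2: "(\<lambda>z. ennreal pB * (ennreal (f3 (fst z)) * ennreal (f4 (snd z)))) \<in> borel_measurable (lborel \<Otimes>\<^sub>M lborel)" by measurable
    have m3: "(\<lambda>z. ennreal (f1 (fst z)) * ennreal (f2 (snd z))) \<in> borel_measurable (lborel \<Otimes>\<^sub>M lborel)" by measurable
    have m4: "(\<lambda>z. ennreal (f3 (fst z)) * ennreal (f4 (snd z))) \<in> borel_measurable (lborel \<Otimes>\<^sub>M lborel)" by measurable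
    have p1: "(\<integral>\<^sup>+z. ennreal (f1 (fst z)) * ennreal (f2 (snd z)) \<partial>(lborel \<Otimes>\<^sub>M lborel)) = (\<integral>\<^sup>+x. ennreal (f1 x) \<partial>lborel) * (\<integral>\<^sup>+x. ennreal (f2 x) \<partial>lborel)"
      by (rule prod_nn) measurable
    have p2: "(\<integral>\<^sup>+z. ennreal (f3 (fst z)) * ennreal (f4 (snd z)) \<partial>(lborel \<Otimes>\<^sub>M lborel)) = (\<integral>\<^sup>+x. ennreal (f3 x) \<partial>lborel) * (\<integral>\<^sup>+x. ennreal (f4 x) \<partial>lborel)"
      by (rule prod_nn) measurable
    show ?thesis
      unfolding nn_integral_add[OF m1 m2] nn_integral_cmult[OF m3] nn_integral_cmult[OF m4] p1 p2 ..
  qed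
  also have "\<dots> = ennreal pA * (ennreal (mom Lc 0) * ennreal (mom Ls (-\<theta>))) + ennreal pB * (ennreal (mom Lc (-\<kappa>)) * ennreal (mom Ls (-\<theta>')))"
  proof -
    have "(\<integral>\<^sup>+x. ennreal (f1 x) \<partial>lborel) = ennreal (mom Lc 0)" unfolding f1_def by (rule mom_eq) (use Lc in auto)
    moreover have "(\<integral>\<^sup>+x. ennreal (f2 x) \<partial>lborel) = ennreal (mom Ls (-\<theta>))" unfolding f2_def by (rule mom_eq) (use Ls th in auto)
    moreover have "(\<integral>\<^sup>+x. ennreal (f3 x) \<partial>lborel) = ennreal (mom Lc (-\<kappa>))" unfolding f3_def by (rule mom_eq) (use Lc k in auto)
    moreover have "(\<integral>\<^sup>+x. ennreal (f4 x) \<partial>lborel) = ennreal (mom Ls (-\<theta>'))" unfolding f4_def by (rule mom_eq) (use Ls t in auto)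
    ultimately show ?thesis by (simp only:)
  qed
  also have "\<dots> = ennreal (pA * (mom Lc 0 * mom Ls (-\<theta>)) + pB * (mom Lc (-\<kappa>) * mom Ls (-\<theta>')))"
    using pnn mom_nonneg by (intro enn_comb[symmetric]) auto
  finally have I: "(\<integral>\<^sup>+z. ennreal (gd Lc (fst z) * gd Ls (snd z) * Wf R \<rho> (fst z) (snd z)) \<partial>(lborel \<Otimes>\<^sub>M lborel))
     \<le> ennreal (pA * (mom Lc 0 * mom Ls (-\<theta>)) + pB * (mom Lc (-\<kappa>) * mom Ls (-\<theta>')))" .
  have "ED_j Ls Lc R \<rho> \<le> pA * (mom Lc 0 * mom Ls (-\<theta>)) + pB * (mom Lc (-\<kappa>) * mom Ls (-\<theta>'))"
    unfolding ED_eq[OF Lc Ls \<rho>0 s1] using pnn mom_nonneg by (intro enn2real_leI I) auto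
  thus ?thesis unfolding pA_def pB_def .
qed

lemma ED_lower:
  assumes Lc: "Lc > 0" and Ls: "Ls > 0" and \<rho>0: "\<rho> > 0" and s1: "2 powr (2*R) \<ge> 1"
    and x1: "0 < x1" "x1 \<le> 1" and y1: "0 < y1" "y1 \<le> 1" and m: "m \<ge> 0"
    and box: "\<And>h g. y1/2 \<le> h \<Longrightarrow> h \<le> y1 \<Longrightarrow> x1/2 \<le> g \<Longrightarrow> g \<le> x1 \<Longrightarrow> m \<le> Wf R \<rho> h g"
  shows "ED_j Ls Lc R \<rho> \<ge> m * ((kL Lc / 2 * y1 powr Lc) * (kL Ls / 2 * x1 powr Ls))"
proof -
  define A where "A x = indicator {y1/2..y1} x * gd Lc x" for x
  define B where "B x = indicator {x1/2..x1} x * gd Ls x" for x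
  have [measurable]: "(\<lambda>x. ennreal (A x)) \<in> borel_measurable borel"
    unfolding A_def by measurable
  have [measurable]: "(\<lambda>x. ennreal (B x)) \<in> borel_measurable borel"
    unfolding B_def by measurable
  have Ann: "A x \<ge> 0" and Bnn: "B x \<ge> 0" for x
    unfolding A_def B_def using gd_nonneg[OF Lc, of x] gd_nonneg[OF Ls, of x] by auto
  have c1: "kL Lc / 2 * y1 powr Lc \<ge> 0" "kL Ls / 2 * x1 powr Ls \<ge> 0"
    using kL_pos[OF Lc] kL_pos[OF Ls] by auto
  have "ennreal (m * ((kL Lc / 2 * y1 powr Lc) * (kL Ls / 2 * x1 powr Ls)))
      = ennreal m * (ennreal (kL Lc / 2 * y1 powr Lc) * ennreal (kL Ls / 2 * x1 powr Ls))"
    using m c1 by (intro enn_comb3) auto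
  also have "\<dots> \<le> ennreal m * ((\<integral>\<^sup>+x. ennreal (A x) \<partial>lborel) * (\<integral>\<^sup>+x. ennreal (B x) \<partial>lborel))"
  proof -
    have b1: "ennreal (kL Lc / 2 * y1 powr Lc) \<le> (\<integral>\<^sup>+x. ennreal (A x) \<partial>lborel)"
      unfolding A_def by (rule box_lower[OF Lc y1])
    have b2: "ennreal (kL Ls / 2 * x1 powr Ls) \<le> (\<integral>\<^sup>+x. ennreal (B x) \<partial>lborel)"
      unfolding B_def by (rule box_lower[OF Ls x1])
    show ?thesis by (rule mult_left_mono[OF mult_mono[OF b1 b2]]) auto
  qed
  also have "\<dots> = (\<integral>\<^sup>+z. ennreal m * (ennreal (A (fst z)) * ennreal (B (snd z))) \<partial>(lborel \<Otimes>\<^sub>M lborel))"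
  proof -
    have m3: "(\<lambda>z. ennreal (A (fst z)) * ennreal (B (snd z))) \<in> borel_measurable (lborel \<Otimes>\<^sub>M lborel)" by measurable
    have p1: "(\<integral>\<^sup>+z. ennreal (A (fst z)) * ennreal (B (snd z)) \<partial>(lborel \<Otimes>\<^sub>M lborel)) = (\<integral>\<^sup>+x. ennreal (A x) \<partial>lborel) * (\<integral>\<^sup>+x. ennreal (B x) \<partial>lborel)"
      by (rule prod_nn) measurable
    show ?thesis unfolding nn_integral_cmult[OF m3] p1 ..
  qed
  also have "\<dots> \<le> (\<integral>\<^sup>+z. ennreal (gd Lc (fst z) * gd Ls (snd z) * Wf R \<rho> (fst z) (snd z)) \<partial>(lborel \<Otimes>\<^sub>M lborel))"
  proof (rule nn_integral_mono)
    fix z :: "real \<times> real"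
    obtain h g where z: "z = (h, g)" by (cases z)
    have "m * (A h * B g) \<le> gd Lc h * gd Ls g * Wf R \<rho> h g"
    proof (cases "h \<in> {y1/2..y1} \<and> g \<in> {x1/2..x1}")
      case True
      have "m \<le> Wf R \<rho> h g" using True box by auto
      moreover have "gd Lc h * gd Ls g \<ge> 0" using gd_nonneg[OF Lc, of h] gd_nonneg[OF Ls, of g] by simp
      ultimately have "gd Lc h * gd Ls g * m \<le> gd Lc h * gd Ls g * Wf R \<rho> h g"
        by (intro mult_left_mono) auto
      thus ?thesis using True by (simp add: A_def B_def algebra_simps)
    next
      case False
      hence AB: "A h * B g = 0" by (auto simp: A_def B_def)
      show ?thesis using F_nonneg[OF Lc Ls \<rho>0 s1, of h g] by (simp only: AB mult_zero_right)
    qed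
    hence "ennreal (m * (A h * B g)) \<le> ennreal (gd Lc h * gd Ls g * Wf R \<rho> h g)" by (rule ennreal_leI)
    moreover have "ennreal (m * (A h * B g)) = ennreal m * (ennreal (A h) * ennreal (B g))"
      using m Ann Bnn by (intro enn_comb3) auto
    ultimately show "ennreal m * (ennreal (A (fst z)) * ennreal (B (snd z))) \<le> ennreal (gd Lc (fst z) * gd Ls (snd z) * Wf R \<rho> (fst z) (snd z))"
      unfolding z by simp
  qed
  finally have I: "ennreal (m * ((kL Lc / 2 * y1 powr Lc) * (kL Ls / 2 * x1 powr Ls))) \<le> (\<integral>\<^sup>+z. ennreal (gd Lc (fst z) * gd Ls (snd z) * Wf R \<rho> (fst z) (snd z)) \<partial>(lborel \<Otimes>\<^sub>M lborel))" .
  have "m * ((kL Lc / 2 * y1 powr Lc) * (kL Ls / 2 * x1 powr Ls)) = enn2real (ennreal (m * ((kL Lc / 2 * y1 powr Lc) * (kL Ls / 2 * x1 powr Ls))))"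
    using m c1 by simp
  also have "\<dots> \<le> ED_j Ls Lc R \<rho>"
    unfolding ED_eq[OF Lc Ls \<rho>0 s1] by (rule enn2real_mono[OF I]) (use F_fin[OF Lc Ls \<rho>0 s1] in simp)
  finally show ?thesis .
qed



lemma lim_up_generic:
  fixes F :: "real \<Rightarrow> real"
  assumes K: "K > 0" and bound: "\<And>\<rho>. \<rho> \<ge> \<rho>0 \<Longrightarrow> F \<rho> \<ge> K * \<rho> powr (-E)" and y: "y > E"
  shows "eventually (\<lambda>\<rho>. - ln (F \<rho>) / ln \<rho> < y) at_top"
proof -
  have lim: "((\<lambda>\<rho>::real. E - ln K / ln \<rho>) \<longlongrightarrow> E) at_top" by real_asymp
  have ev1: "eventually (\<lambda>\<rho>. E - ln K / ln \<rho> < y) at_top" using order_tendstoD(2)[OF lim y] .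
  have ev2: "eventually (\<lambda>\<rho>. \<rho> \<ge> max \<rho>0 2) at_top" by (rule eventually_ge_at_top)
  show ?thesis using ev1 ev2
  proof eventually_elim
    case (elim \<rho>)
    have \<rho>: "\<rho> \<ge> \<rho>0" "\<rho> \<ge> 2" using elim by auto
    have lp: "ln \<rho> > 0" using \<rho> by simp
    have pos: "K * \<rho> powr (-E) > 0" using K \<rho> by simp
    have "ln (K * \<rho> powr (-E)) \<le> ln (F \<rho>)" using bound[OF \<rho>(1)] pos by (subst ln_le_cancel_iff) auto
    moreover have "ln (K * \<rho> powr (-E)) = ln K - E * ln \<rho>" using K \<rho> by (simp add: ln_mult ln_powr)
    ultimately have "- ln (F \<rho>) \<le> E * ln \<rho> - ln K" by simp
    hence "- ln (F \<rho>) / ln \<rho> \<le> (E * ln \<rho> - ln K) / ln \<rho>" using lp by (intro divide_right_mono) auto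
    also have "\<dots> = E - ln K / ln \<rho>" using lp by (simp add: field_simps)
    finally show ?case using elim by simp
  qed
qed

lemma lim_low_generic:
  fixes F :: "real \<Rightarrow> real"
  assumes C: "C \<ge> 0" and D: "D \<ge> 0"
    and bound: "\<And>\<rho>. \<rho> \<ge> \<rho>0 \<Longrightarrow> F \<rho> \<le> C * \<rho> powr (-d1) + D * \<rho> powr (-d2)"
    and pos: "\<And>\<rho>. \<rho> \<ge> \<rho>0 \<Longrightarrow> F \<rho> > 0" and y: "y < min d1 d2"
  shows "eventually (\<lambda>\<rho>. - ln (F \<rho>) / ln \<rho> > y) at_top"
proof -
  define m where "m = min d1 d2"
  have lim: "((\<lambda>\<rho>::real. m - ln (C + D + 1) / ln \<rho>) \<longlongrightarrow> m) at_top" by real_asymp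
  have ev1: "eventually (\<lambda>\<rho>. m - ln (C + D + 1) / ln \<rho> > y) at_top" using order_tendstoD(1)[OF lim] y m_def by simp
  have ev2: "eventually (\<lambda>\<rho>. \<rho> \<ge> max \<rho>0 2) at_top" by (rule eventually_ge_at_top)
  show ?thesis using ev1 ev2
  proof eventually_elim
    case (elim \<rho>)
    have \<rho>: "\<rho> \<ge> \<rho>0" "\<rho> \<ge> 2" using elim by auto
    have lp: "ln \<rho> > 0" using \<rho> by simp
    have p1: "\<rho> powr (-d1) \<le> \<rho> powr (-m)" using \<rho> by (intro powr_mono) (auto simp: m_def)
    have p2: "\<rho> powr (-d2) \<le> \<rho> powr (-m)" using \<rho> by (intro powr_mono) (auto simp: m_def)
    have "F \<rho> \<le> C * \<rho> powr (-m) + D * \<rho> powr (-m)"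
      using bound[OF \<rho>(1)] mult_left_mono[OF p1 C] mult_left_mono[OF p2 D] by linarith
    also have "\<dots> \<le> (C + D + 1) * \<rho> powr (-m)" using \<rho> by (simp add: algebra_simps)
    finally have Fb: "F \<rho> \<le> (C + D + 1) * \<rho> powr (-m)" .
    have "ln (F \<rho>) \<le> ln ((C + D + 1) * \<rho> powr (-m))" using Fb pos[OF \<rho>(1)] by (subst ln_le_cancel_iff) auto
    also have "\<dots> = ln (C + D + 1) - m * ln \<rho>" using C D \<rho> by (simp add: ln_mult ln_powr)
    finally have "m * ln \<rho> - ln (C + D + 1) \<le> - ln (F \<rho>)" by simp
    hence "(m * ln \<rho> - ln (C + D + 1)) / ln \<rho> \<le> - ln (F \<rho>) / ln \<rho>" using lp by (intro divide_right_mono) auto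
    moreover have "(m * ln \<rho> - ln (C + D + 1)) / ln \<rho> = m - ln (C + D + 1) / ln \<rho>" using lp by (simp add: field_simps)
    ultimately show ?case using elim by simp
  qed
qed

lemma two_powr_R: "\<rho> > 0 \<Longrightarrow> 2 powr (2 * (r / 2 * log 2 \<rho>)) = \<rho> powr (r::real)"
proof -
  assume \<rho>: "\<rho> > 0"
  have "2 powr (2 * (r / 2 * log 2 \<rho>)) = 2 powr (log 2 \<rho> * r)" by (simp add: algebra_simps)
  also have "\<dots> = (2 powr log 2 \<rho>) powr r" by (simp add: powr_powr)
  also have "\<dots> = \<rho> powr r" using \<rho> by simp
  finally show ?thesis .
qed



lemma W_ge:
  assumes "\<rho> > 0" "h \<ge> 0" "g \<ge> 0" "2 powr (2*R) \<ge> 1"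
  shows "Wf R \<rho> h g \<ge> 1/(\<rho>*g + 2 powr (2*R))"
proof -
  have pg: "\<rho>*g \<ge> 0" using assms by simp
  have "1/(\<rho>*g + 2 powr (2*R)) \<le> 1/(\<rho>*g+1)"
    using pg assms(4) by (intro divide_left_mono) (auto intro!: mult_pos_pos add_nonneg_pos)
  thus ?thesis using W_cases[OF assms] by auto
qed

lemma powr_le_mono: "(\<rho>::real) \<ge> 1 \<Longrightarrow> a \<le> b \<Longrightarrow> \<rho> powr a \<le> \<rho> powr b"
  by (rule powr_mono) auto

lemma LA:
  fixes Ls Lc r \<beta> :: real
  assumes Lc: "Lc > 0" and Ls: "Ls > 0" and r: "r > 0" and \<beta>: "\<beta> \<ge> 0"
  shows "\<exists>K>0. \<forall>\<rho>\<ge>1. ED_j Ls Lc (r/2*log 2 \<rho>) \<rho> \<ge> K * \<rho> powr (-(Ls*\<beta> + max (1-\<beta>) r))"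
proof -
  define K where "K = (kL Lc / 2) * (kL Ls / 2) / 2"
  have K: "K > 0" unfolding K_def using kL_pos[OF Lc] kL_pos[OF Ls] by simp
  have "ED_j Ls Lc (r/2*log 2 \<rho>) \<rho> \<ge> K * \<rho> powr (-(Ls*\<beta> + max (1-\<beta>) r))" if \<rho>: "\<rho> \<ge> 1" for \<rho>
  proof -
    define M where "M = max (1-\<beta>) r"
    define x1 where "x1 = \<rho> powr (-\<beta>)"
    have \<rho>0: "\<rho> > 0" using \<rho> by linarith
    have s: "2 powr (2 * (r/2*log 2 \<rho>)) = \<rho> powr r" using two_powr_R[OF \<rho>0] .
    have s1: "2 powr (2 * (r/2*log 2 \<rho>)) \<ge> 1" using s \<rho> r by (simp add: ge_one_powr_ge_zero)
    have x1: "0 < x1" "x1 \<le> 1" unfolding x1_def using \<rho>0 powr_le_mono[OF \<rho>, of "-\<beta>" 0] \<beta> by auto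
    have pM: "\<rho> powr M > 0" using \<rho>0 by simp
    have box: "1 / (2 * \<rho> powr M) \<le> Wf (r/2*log 2 \<rho>) \<rho> h g"
      if "1/2 \<le> h" "h \<le> 1" "x1/2 \<le> g" "g \<le> x1" for h g
    proof -
      have g0: "g \<ge> 0" using that x1 by auto
      have "\<rho> * g \<le> \<rho> * x1" using that \<rho>0 by simp
      also have "\<rho> * x1 = \<rho> powr (1 - \<beta>)" unfolding x1_def using \<rho>0 by (simp add: powr_diff powr_minus divide_inverse)
      also have "\<dots> \<le> \<rho> powr M" unfolding M_def by (rule powr_le_mono[OF \<rho>]) auto
      finally have a: "\<rho> * g \<le> \<rho> powr M" .
      have b: "\<rho> powr r \<le> \<rho> powr M" unfolding M_def by (rule powr_le_mono[OF \<rho>]) auto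
      have "1 / (2 * \<rho> powr M) \<le> 1 / (\<rho> * g + \<rho> powr r)"
      proof (rule divide_left_mono)
        have q: "\<rho> * g + \<rho> powr r > 0" using g0 \<rho>0 by (simp add: add_nonneg_pos)
        show "0 < 2 * \<rho> powr M * (\<rho> * g + \<rho> powr r)" using q pM by simp
      next
        show "\<rho> * g + \<rho> powr r \<le> 2 * \<rho> powr M" using a b by linarith
      qed simp
      also have "\<dots> \<le> Wf (r/2*log 2 \<rho>) \<rho> h g" using W_ge[OF \<rho>0 _ g0 s1, of h] that s by simp
      finally show ?thesis .
    qed
    have "ED_j Ls Lc (r/2*log 2 \<rho>) \<rho> \<ge> 1 / (2 * \<rho> powr M) * ((kL Lc / 2 * 1 powr Lc) * (kL Ls / 2 * x1 powr Ls))"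
      by (rule ED_lower[OF Lc Ls \<rho>0 s1 x1 _ _ _ box]) (use pM in auto)
    also have "1 / (2 * \<rho> powr M) * ((kL Lc / 2 * 1 powr Lc) * (kL Ls / 2 * x1 powr Ls))
       = K * (\<rho> powr (-M) * \<rho> powr (-\<beta> * Ls))"
    proof -
      have e1: "x1 powr Ls = \<rho> powr (-\<beta>*Ls)" unfolding x1_def by (rule powr_powr)
      have e2: "1/(2*\<rho> powr M) = \<rho> powr (-M) / 2" unfolding powr_minus_divide by simp
      show ?thesis unfolding e1 e2 K_def by simp
    qed
    also have "\<rho> powr (-M) * \<rho> powr (-\<beta> * Ls) = \<rho> powr (-(Ls*\<beta> + max (1-\<beta>) r))"
      unfolding M_def powr_add[symmetric] by (rule arg_cong[where f="\<lambda>x. \<rho> powr x"]) (simp add: algebra_simps)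
    finally show ?thesis .
  qed
  thus ?thesis using K by blast
qed



lemma LB:
  fixes Ls Lc r \<beta> :: real
  assumes Lc: "Lc > 0" and Ls: "Ls > 0" and r: "r > 0" and \<beta>: "\<beta> \<ge> 0"
  shows "\<exists>K>0. \<exists>\<rho>0. \<forall>\<rho>\<ge>\<rho>0. ED_j Ls Lc (r/2*log 2 \<rho>) \<rho> \<ge>
            K * \<rho> powr (-(Ls*\<beta> + max 0 (1-\<beta>) + Lc * max 0 (1 - r + max 0 (1-\<beta>))))"
proof -
  define P where "P = max 0 (1-\<beta>)"
  define \<gamma> where "\<gamma> = max 0 (1 - r + P)"
  define K where "K = (kL Lc / 2 / 4 powr Lc) * (kL Ls / 2) / 2"
  define \<rho>0 where "\<rho>0 = max 1 (2 powr (1/r))"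
  have K: "K > 0" unfolding K_def using kL_pos[OF Lc] kL_pos[OF Ls] by simp
  have "ED_j Ls Lc (r/2*log 2 \<rho>) \<rho> \<ge> K * \<rho> powr (-(Ls*\<beta> + P + Lc * \<gamma>))" if \<rho>\<rho>: "\<rho> \<ge> \<rho>0" for \<rho>
  proof -
    have \<rho>: "\<rho> \<ge> 1" using \<rho>\<rho> unfolding \<rho>0_def by linarith
    have \<rho>0': "\<rho> > 0" using \<rho> by linarith
    have s: "2 powr (2 * (r/2*log 2 \<rho>)) = \<rho> powr r" using two_powr_R[OF \<rho>0'] .
    have s1: "2 powr (2 * (r/2*log 2 \<rho>)) \<ge> 1" using s \<rho> r by (simp add: ge_one_powr_ge_zero)
    have s2: "\<rho> powr r \<ge> 2"
    proof -
      have "(2::real) = (2 powr (1/r)) powr r" unfolding powr_powr using r by simp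
      also have "\<dots> \<le> \<rho> powr r" using \<rho>\<rho> r unfolding \<rho>0_def by (intro powr_mono2) auto
      finally show ?thesis .
    qed
    define x1 where "x1 = \<rho> powr (-\<beta>)"
    define y1 where "y1 = \<rho> powr (-\<gamma>) / 4"
    have P0: "P \<ge> 0" and g0': "\<gamma> \<ge> 0" and Pb: "1 - \<beta> \<le> P" and gb: "1 - r + P \<le> \<gamma>"
      unfolding P_def \<gamma>_def by auto
    have x1: "0 < x1" "x1 \<le> 1" unfolding x1_def using \<rho>0' powr_le_mono[OF \<rho>, of "-\<beta>" 0] \<beta> by auto
    have y1': "\<rho> powr (-\<gamma>) \<le> 1" using powr_le_mono[OF \<rho>, of "-\<gamma>" 0] g0' \<rho>0' by auto
    have y1: "0 < y1" "y1 \<le> 1" unfolding y1_def using \<rho>0' y1' by auto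
    have pP: "\<rho> powr P \<ge> 1" using powr_le_mono[OF \<rho>, of 0 P] P0 \<rho>0' by auto
    have box: "1 / (2 * \<rho> powr P) \<le> Wf (r/2*log 2 \<rho>) \<rho> h g"
      if hg: "y1/2 \<le> h" "h \<le> y1" "x1/2 \<le> g" "g \<le> x1" for h g
    proof -
      have g0: "g \<ge> 0" and h0: "h \<ge> 0" using hg x1 y1 by auto
      have A: "\<rho> * x1 = \<rho> powr (1 - \<beta>)" unfolding x1_def using \<rho>0' by (simp add: powr_diff powr_minus divide_inverse)
      have A2: "\<rho> powr (1 - \<beta>) \<le> \<rho> powr P" by (rule powr_le_mono[OF \<rho> Pb])
      have gx: "\<rho> * g \<le> \<rho> * x1" using hg \<rho>0' by simp
      have B: "\<rho> * g + 1 \<le> 2 * \<rho> powr P" using gx A A2 pP by linarith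
      have c1: "\<rho> powr (1 - \<gamma>) = \<rho> * \<rho> powr (-\<gamma>)"
      proof -
        have "\<rho> powr (1 - \<gamma>) = \<rho> powr (1 + -\<gamma>)" by simp
        also have "\<dots> = \<rho> powr 1 * \<rho> powr (-\<gamma>)" by (rule powr_add)
        also have "\<rho> powr 1 = \<rho>" using \<rho>0' by simp
        finally show ?thesis .
      qed
      have C: "\<rho> * y1 = \<rho> powr (1 - \<gamma>) / 4" unfolding y1_def c1 by simp
      have "\<rho> * h * (\<rho> * g + 1) \<le> (\<rho> * y1) * (2 * \<rho> powr P)"
        using hg \<rho>0' B g0 h0 by (intro mult_mono) auto
      also have "\<dots> = (\<rho> powr (1 - \<gamma>) * \<rho> powr P) / 2"
      proof -
        have gen: "\<And>X Y::real. X/4 * (2*Y) = X*Y/2" by simp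
        show ?thesis unfolding C by (rule gen)
      qed
      also have "\<rho> powr (1 - \<gamma>) * \<rho> powr P = \<rho> powr (1 - \<gamma> + P)" by (rule powr_add[symmetric])
      also have "\<rho> powr (1 - \<gamma> + P) \<le> \<rho> powr r" by (rule powr_le_mono[OF \<rho>]) (use gb in linarith)
      finally have out: "\<rho> * h * (\<rho> * g + 1) \<le> \<rho> powr r - 1" using s2 by linarith
      have W: "Wf (r/2*log 2 \<rho>) \<rho> h g = 1 / (\<rho> * g + 1)"
        using W_cases[OF \<rho>0' h0 g0 s1] out s by simp
      have "1 / (2 * \<rho> powr P) \<le> 1 / (\<rho> * g + 1)"
      proof (rule divide_left_mono)
        have q: "\<rho> * g + 1 > 0" using g0 \<rho>0' by (simp add: add_nonneg_pos)
        have "\<rho> powr P > 0" using pP by linarith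
        thus "0 < 2 * \<rho> powr P * (\<rho> * g + 1)" using q by simp
      next
        show "\<rho> * g + 1 \<le> 2 * \<rho> powr P" by (rule B)
      qed simp
      thus ?thesis unfolding W .
    qed
    have pP': "\<rho> powr P > 0" using \<rho>0' by simp
    have "ED_j Ls Lc (r/2*log 2 \<rho>) \<rho> \<ge> 1 / (2 * \<rho> powr P) * ((kL Lc / 2 * y1 powr Lc) * (kL Ls / 2 * x1 powr Ls))"
      by (rule ED_lower[OF Lc Ls \<rho>0' s1 x1 y1 _ box]) (use pP' in auto)
    also have "1 / (2 * \<rho> powr P) * ((kL Lc / 2 * y1 powr Lc) * (kL Ls / 2 * x1 powr Ls))
       = K * (\<rho> powr (-P) * \<rho> powr (-\<gamma>*Lc) * \<rho> powr (-\<beta> * Ls))"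
    proof -
      have e1: "x1 powr Ls = \<rho> powr (-\<beta>*Ls)" unfolding x1_def by (rule powr_powr)
      have e2: "1/(2*\<rho> powr P) = \<rho> powr (-P) / 2" unfolding powr_minus_divide by simp
      have e3: "y1 powr Lc = \<rho> powr (-\<gamma>*Lc) / 4 powr Lc"
      proof -
        have "y1 powr Lc = (\<rho> powr (-\<gamma>)) powr Lc / 4 powr Lc" unfolding y1_def
          by (rule powr_divide)
        also have "(\<rho> powr (-\<gamma>)) powr Lc = \<rho> powr (-\<gamma>*Lc)" by (rule powr_powr)
        finally show ?thesis .
      qed
      show ?thesis unfolding e1 e2 e3 K_def by simp
    qed
    also have "\<rho> powr (-P) * \<rho> powr (-\<gamma>*Lc) * \<rho> powr (-\<beta> * Ls) = \<rho> powr (-(Ls*\<beta> + P + Lc * \<gamma>))"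
      unfolding powr_add[symmetric] by (rule arg_cong[where f="\<lambda>x. \<rho> powr x"]) (simp add: algebra_simps)
    finally show ?thesis .
  qed
  thus ?thesis using K unfolding P_def \<gamma>_def by blast
qed



lemma scale_lt: "0 < (t::real) \<Longrightarrow> t < 1 \<Longrightarrow> 0 \<le> x \<Longrightarrow> x \<le> B \<Longrightarrow> 0 < B \<Longrightarrow> t * x < B"
proof -
  assume a: "0 < t" "t < 1" "0 \<le> x" "x \<le> B" "0 < B"
  show "t * x < B"
  proof (cases "x = 0")
    case True thus ?thesis using a by simp
  next
    case False
    hence "t * x < 1 * x" using a by (intro mult_strict_right_mono) auto
    thus ?thesis using a by simp
  qed
qed

lemma tendsto_phi:
  fixes Ls Lc r \<beta>A \<beta>B \<theta> \<kappa> \<theta>' e :: real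
  assumes Lc: "Lc > 0" and Ls: "Ls > 0" and r: "r > 0" and bA: "\<beta>A \<ge> 0" and bB: "\<beta>B \<ge> 0"
    and th: "0 \<le> \<theta>" "\<theta> \<le> 1" "\<theta> \<le> Ls" and k: "0 \<le> \<kappa>" "\<kappa> \<le> Lc"
    and t: "0 \<le> \<theta>'" "\<theta>' \<le> 1 + \<kappa>" "\<theta>' \<le> Ls"
    and e1: "e = min (Ls*\<beta>A + max (1-\<beta>A) r) (Ls*\<beta>B + max 0 (1-\<beta>B) + Lc * max 0 (1 - r + max 0 (1-\<beta>B)))"
    and e2: "e = min (\<theta> + r*(1-\<theta>)) (\<theta>' + (1-r)*\<kappa>)"
  shows "((\<lambda>\<rho>. - ln (ED_j Ls Lc (r/2*log 2 \<rho>) \<rho>) / ln \<rho>) \<longlongrightarrow> e) at_top"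
proof -
  define F where "F \<rho> = ED_j Ls Lc (r/2*log 2 \<rho>) \<rho>" for \<rho>
  define EA where "EA = Ls*\<beta>A + max (1-\<beta>A) r"
  define EB where "EB = Ls*\<beta>B + max 0 (1-\<beta>B) + Lc * max 0 (1 - r + max 0 (1-\<beta>B))"
  obtain KA where KA: "KA > 0" and LAb: "\<And>\<rho>. \<rho> \<ge> 1 \<Longrightarrow> F \<rho> \<ge> KA * \<rho> powr (-EA)"
    using LA[OF Lc Ls r bA] unfolding F_def EA_def by blast
  obtain KB \<rho>B where KB: "KB > 0" and LBb: "\<And>\<rho>. \<rho> \<ge> \<rho>B \<Longrightarrow> F \<rho> \<ge> KB * \<rho> powr (-EB)"
    using LB[OF Lc Ls r bB] unfolding F_def EB_def by blast
  have pos: "F \<rho> > 0" if "\<rho> \<ge> 1" for \<rho>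
  proof -
    have "KA * \<rho> powr (-EA) > 0" using KA that by simp
    thus ?thesis using LAb[OF that] by linarith
  qed
  show ?thesis unfolding F_def[symmetric]
  proof (rule order_tendstoI)
    fix y assume y: "y > e"
    show "eventually (\<lambda>\<rho>. - ln (F \<rho>) / ln \<rho> < y) at_top"
    proof (cases "EA \<le> EB")
      case True
      hence yy: "EA < y" using y e1 unfolding EA_def EB_def by linarith
      show ?thesis by (rule lim_up_generic[OF KA _ yy]) (rule LAb, assumption)
    next
      case False
      hence yy: "EB < y" using y e1 unfolding EA_def EB_def by linarith
      show ?thesis by (rule lim_up_generic[OF KB _ yy]) (rule LBb, assumption)
    qed
  next
    fix y assume y: "y < e"
    define f where "f t = min (t*\<theta> + r*(1-t*\<theta>)) (t*\<theta>' + (1-r)*(t*\<kappa>))" for t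
    have "isCont f 1" unfolding f_def by (intro continuous_intros)
    hence "(f \<longlongrightarrow> f 1) (at 1)" by (simp add: isCont_def)
    hence lim: "(f \<longlongrightarrow> f 1) (at_left 1)" using filterlim_at_split by blast
    have f1: "f 1 = e" unfolding f_def e2 by simp
    have "eventually (\<lambda>x. f x > y) (at_left 1)" using order_tendstoD(1)[OF lim] y f1 by simp
    moreover have "eventually (\<lambda>x. x \<in> {0<..<(1::real)}) (at_left 1)" by (rule eventually_at_left_real) simp
    ultimately have "eventually (\<lambda>x. f x > y \<and> x \<in> {0<..<(1::real)}) (at_left 1)" by (rule eventually_conj)
    then obtain tt where tt: "f tt > y" "0 < tt" "tt < 1"
      using eventually_happens[of _ "at_left (1::real)"] trivial_limit_at_left_real by force
    define C where "C = mom Lc 0 * mom Ls (-(tt*\<theta>))"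
    define D where "D = mom Lc (-(tt*\<kappa>)) * mom Ls (-(tt*\<theta>'))"
    have C: "C \<ge> 0" and D: "D \<ge> 0" unfolding C_def D_def using mom_nonneg by auto
    have c1: "0 \<le> tt*\<theta>" "tt*\<theta> \<le> 1" "tt*\<theta> < Ls"
      using tt th scale_lt[of tt \<theta> Ls] mult_left_le_one_le[of \<theta> tt] Ls by auto
    have c2: "0 \<le> tt*\<kappa>" "tt*\<kappa> < Lc"
      using tt k scale_lt[of tt \<kappa> Lc] Lc by auto
    have c3: "0 \<le> tt*\<theta>'" "tt*\<theta>' < Ls" using tt t scale_lt[of tt \<theta>' Ls] Ls by auto
    have c4: "tt*\<theta>' \<le> 1 + tt*\<kappa>"
    proof -
      have "tt*\<theta>' \<le> tt*(1+\<kappa>)" using tt t by (intro mult_left_mono) auto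
      thus ?thesis using tt by (simp add: algebra_simps)
    qed
    have bound: "F \<rho> \<le> C * \<rho> powr (-(tt*\<theta> + r*(1-tt*\<theta>))) + D * \<rho> powr (-(tt*\<theta>' + (1-r)*(tt*\<kappa>)))"
      if \<rho>: "\<rho> \<ge> 1" for \<rho>
    proof -
      have \<rho>0: "\<rho> > 0" using \<rho> by linarith
      have "F \<rho> \<le> \<rho> powr (-(tt*\<theta> + r*(1-tt*\<theta>))) * (mom Lc 0 * mom Ls (-(tt*\<theta>)))
          + \<rho> powr (r*(tt*\<kappa>) - tt*\<kappa> - tt*\<theta>') * (mom Lc (-(tt*\<kappa>)) * mom Ls (-(tt*\<theta>')))"
        unfolding F_def
        by (rule ED_upper[OF Lc Ls \<rho> _ two_powr_R[OF \<rho>0] c1 c2 c3(1) c4 c3(2)]) (use r in auto)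
      also have "r*(tt*\<kappa>) - tt*\<kappa> - tt*\<theta>' = -(tt*\<theta>' + (1-r)*(tt*\<kappa>))" by (simp add: algebra_simps)
      finally show ?thesis unfolding C_def D_def by (simp add: algebra_simps)
    qed
    have ym: "y < min (tt*\<theta> + r*(1-tt*\<theta>)) (tt*\<theta>' + (1-r)*(tt*\<kappa>))" using tt(1) unfolding f_def .
    show "eventually (\<lambda>\<rho>. - ln (F \<rho>) / ln \<rho> > y) at_top"
      apply (rule lim_low_generic[OF C D _ _ ym])
       apply (rule bound, assumption)
      apply (rule pos, assumption)
      done
  qed
qed



definition exA :: "real \<Rightarrow> real \<Rightarrow> real" where
  "exA Ls r = (if r < 1 then r + min Ls 1 * (1 - r) else r)"
definition exB :: "real \<Rightarrow> real \<Rightarrow> real \<Rightarrow> real" where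
  "exB Ls Lc r = (if r < 1 then min Ls (1 + Lc) + Lc * (1 - r)
      else if Ls \<le> 1 then Ls else if r \<le> 2 then 1 + min (Ls - 1) Lc * (2 - r) else 1)"
definition ex :: "real \<Rightarrow> real \<Rightarrow> real \<Rightarrow> real" where
  "ex Ls Lc r = min (exA Ls r) (exB Ls Lc r)"

lemma lim_ex:
  fixes Ls Lc r :: real
  assumes Lc: "Lc > 0" and Ls: "Ls > 0" and r: "r > 0"
  shows "((\<lambda>\<rho>. - ln (ED_j Ls Lc (r/2*log 2 \<rho>) \<rho>) / ln \<rho>) \<longlongrightarrow> ex Ls Lc r) at_top"
proof -
  consider (C1) "r < 1" "Ls \<le> 1" | (C2) "r < 1" "1 < Ls" "Ls \<le> 1 + Lc" | (C3) "r < 1" "Ls > 1 + Lc"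
    | (C4) "r \<ge> 1" "Ls \<le> 1" | (C5) "r \<ge> 1" "r \<le> 2" "1 < Ls" "Ls \<le> 1 + Lc"
    | (C6) "r \<ge> 1" "r \<le> 2" "Ls > 1 + Lc" | (C7) "r > 2" "Ls > 1"
    by linarith
  thus ?thesis
  proof cases
    case C1
    show ?thesis
    proof (rule tendsto_phi[OF Lc Ls r, of "1 - r" 1 Ls Lc Ls])
      show "ex Ls Lc r = min (Ls * (1 - r) + max (1 - (1 - r)) r)
          (Ls * 1 + max 0 (1 - 1) + Lc * max 0 (1 - r + max 0 (1 - 1)))"
        using C1 Lc Ls by (simp add: ex_def exA_def exB_def min_def max_def algebra_simps)
      show "ex Ls Lc r = min (Ls + r * (1 - Ls)) (Ls + (1 - r) * Lc)"
        using C1 Lc Ls by (simp add: ex_def exA_def exB_def min_def max_def algebra_simps)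
    qed (use C1 Lc Ls in auto)
  next
    case C2
    show ?thesis
    proof (rule tendsto_phi[OF Lc Ls r, of 0 1 1 Lc Ls])
      show "ex Ls Lc r = min (Ls * 0 + max (1 - 0) r)
          (Ls * 1 + max 0 (1 - 1) + Lc * max 0 (1 - r + max 0 (1 - 1)))"
        using C2 Lc Ls by (simp add: ex_def exA_def exB_def min_def max_def algebra_simps)
      show "ex Ls Lc r = min (1 + r * (1 - 1)) (Ls + (1 - r) * Lc)"
        using C2 Lc Ls by (simp add: ex_def exA_def exB_def min_def max_def algebra_simps)
    qed (use C2 Lc Ls in auto)
  next
    case C3
    show ?thesis
    proof (rule tendsto_phi[OF Lc Ls r, of 0 0 1 Lc "1 + Lc"])
      show "ex Ls Lc r = min (Ls * 0 + max (1 - 0) r)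
          (Ls * 0 + max 0 (1 - 0) + Lc * max 0 (1 - r + max 0 (1 - 0)))"
        using C3 Lc Ls by (simp add: ex_def exA_def exB_def min_def max_def algebra_simps)
      show "ex Ls Lc r = min (1 + r * (1 - 1)) (1 + Lc + (1 - r) * Lc)"
        using C3 Lc Ls by (simp add: ex_def exA_def exB_def min_def max_def algebra_simps)
    qed (use C3 Lc Ls in auto)
  next
    case C4
    show ?thesis
    proof (rule tendsto_phi[OF Lc Ls r, of 0 1 0 0 Ls])
      show "ex Ls Lc r = min (Ls * 0 + max (1 - 0) r)
          (Ls * 1 + max 0 (1 - 1) + Lc * max 0 (1 - r + max 0 (1 - 1)))"
        using C4 Lc Ls by (simp add: ex_def exA_def exB_def min_def max_def algebra_simps)
      show "ex Ls Lc r = min (0 + r * (1 - 0)) (Ls + (1 - r) * 0)"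
        using C4 Lc Ls by (simp add: ex_def exA_def exB_def min_def max_def algebra_simps)
    qed (use C4 Lc Ls in auto)
  next
    case C5
    show ?thesis
    proof (rule tendsto_phi[OF Lc Ls r, of 0 "2 - r" 0 "Ls - 1" Ls])
      show "ex Ls Lc r = min (Ls * 0 + max (1 - 0) r)
          (Ls * (2 - r) + max 0 (1 - (2 - r)) + Lc * max 0 (1 - r + max 0 (1 - (2 - r))))"
        using C5 Lc Ls by (simp add: ex_def exA_def exB_def min_def max_def algebra_simps)
      show "ex Ls Lc r = min (0 + r * (1 - 0)) (Ls + (1 - r) * (Ls - 1))"
        using C5 Lc Ls by (simp add: ex_def exA_def exB_def min_def max_def algebra_simps)
    qed (use C5 Lc Ls in auto)
  next
    case C6
    show ?thesis
    proof (rule tendsto_phi[OF Lc Ls r, of 0 0 0 Lc "1 + Lc"])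
      show "ex Ls Lc r = min (Ls * 0 + max (1 - 0) r)
          (Ls * 0 + max 0 (1 - 0) + Lc * max 0 (1 - r + max 0 (1 - 0)))"
        using C6 Lc Ls by (simp add: ex_def exA_def exB_def min_def max_def algebra_simps)
      show "ex Ls Lc r = min (0 + r * (1 - 0)) (1 + Lc + (1 - r) * Lc)"
        using C6 Lc Ls by (simp add: ex_def exA_def exB_def min_def max_def algebra_simps)
    qed (use C6 Lc Ls in auto)
  next
    case C7
    show ?thesis
    proof (rule tendsto_phi[OF Lc Ls r, of 0 0 0 0 1])
      show "ex Ls Lc r = min (Ls * 0 + max (1 - 0) r)
          (Ls * 0 + max 0 (1 - 0) + Lc * max 0 (1 - r + max 0 (1 - 0)))"
        using C7 Lc Ls by (simp add: ex_def exA_def exB_def min_def max_def algebra_simps)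
      show "ex Ls Lc r = min (0 + r * (1 - 0)) (1 + (1 - r) * 0)"
        using C7 Lc Ls by (simp add: ex_def exA_def exB_def min_def max_def algebra_simps)
    qed (use C7 Lc Ls in auto)
  qed
qed



lemma Delta_le1:
  fixes Ls Lc :: real
  assumes Lc: "Lc > 0" and Ls: "Ls > 0" "Ls \<le> 1"
  shows "Delta_formula Ls Lc = Ls + Lc * (1 - Ls) / (Lc + 1 - Ls)"
proof -
  have D: "Lc + 1 - Ls > 0" using Lc Ls by linarith
  have "1 - (1 - Ls)\<^sup>2 / (Lc + 1 - Ls) = Ls + Lc * (1 - Ls) / (Lc + 1 - Ls)"
    using D by (simp add: field_simps power2_eq_square)
  thus ?thesis using Ls unfolding Delta_formula_def by simp
qed

lemma min_weighted:
  fixes X Y u v T :: real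
  assumes "u > 0" "v \<ge> 0" "u * X + v * Y = (u + v) * T"
  shows "min X Y \<le> T"
proof (rule ccontr)
  assume "\<not> min X Y \<le> T"
  hence a: "X > T" "Y > T" by auto
  have "u * X > u * T" using a assms by simp
  moreover have "v * Y \<ge> v * T" using a assms by (intro mult_left_mono) auto
  ultimately have "u * X + v * Y > (u + v) * T" by (simp add: algebra_simps)
  thus False using assms by simp
qed

lemma ex_le:
  fixes Ls Lc r :: real
  assumes Lc: "Lc > 0" and Ls: "Ls > 0" and r: "r > 0"
  shows "ex Ls Lc r \<le> Delta_formula Ls Lc"
proof (cases "Ls \<le> 1")
  case True
  define D where "D = Lc + 1 - Ls"
  define t where "t = Lc * (1 - Ls) / D"
  have D: "D > 0" unfolding D_def using Lc True by linarith
  have tD: "t * D = Lc * (1 - Ls)" unfolding t_def using D by simp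
  have t0: "t \<ge> 0" unfolding t_def using D True Lc by simp
  have Dl: "Delta_formula Ls Lc = Ls + t" unfolding t_def D_def using Delta_le1[OF Lc Ls True] .
  show ?thesis
  proof (cases "r < 1")
    case r1: True
    have m1: "min Ls 1 = Ls" "min Ls (1 + Lc) = Ls" using True Lc by auto
    have e: "ex Ls Lc r = Ls + min (r * (1 - Ls)) (Lc * (1 - r))"
      unfolding ex_def exA_def exB_def using r1 m1 by (simp add: algebra_simps min_add_distrib_left)
    have "min (r * (1 - Ls)) (Lc * (1 - r)) \<le> t"
    proof (rule min_weighted[of Lc "1 - Ls"])
      show "Lc * (r * (1 - Ls)) + (1 - Ls) * (Lc * (1 - r)) = (Lc + (1 - Ls)) * t"
        using tD unfolding D_def by (simp add: algebra_simps)
    qed (use Lc True in auto)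
    thus ?thesis using e Dl by simp
  next
    case False
    have "ex Ls Lc r \<le> Ls" unfolding ex_def exB_def using False True by simp
    thus ?thesis using Dl t0 by simp
  qed
next
  case Ls1: False
  have D1: "Delta_formula Ls Lc \<ge> 1"
  proof -
    have "1 - 1 / Ls \<ge> 0" using Ls1 by (simp add: field_simps)
    moreover have "Lc / (Lc + 1) \<ge> 0" using Lc by simp
    ultimately show ?thesis unfolding Delta_formula_def using Ls1 by auto
  qed
  consider (a) "r < 1" | (b) "r > 2" | (c) "1 \<le> r" "r \<le> 2" by linarith
  thus ?thesis
  proof cases
    case a
    have "ex Ls Lc r \<le> 1" unfolding ex_def exA_def using a Ls1 by simp
    thus ?thesis using D1 by simp
  next
    case b
    have "ex Ls Lc r \<le> 1" unfolding ex_def exB_def using b Ls1 by simp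
    thus ?thesis using D1 by simp
  next
    case c
    define K where "K = min (Ls - 1) Lc"
    have K: "K > 0" unfolding K_def using Ls1 Lc by simp
    have e: "ex Ls Lc r = min r (1 + K * (2 - r))"
      unfolding ex_def exA_def exB_def K_def using c Ls1 by auto
    have "min r (1 + K * (2 - r)) \<le> (1 + 2*K) / (1 + K)"
    proof (rule min_weighted[of K 1])
      show "K * r + 1 * (1 + K * (2 - r)) = (K + 1) * ((1 + 2 * K) / (1 + K))"
        using K by (simp add: field_simps)
    qed (use K in auto)
    moreover have "(1 + 2*K) / (1 + K) = Delta_formula Ls Lc"
    proof (cases "Ls \<le> 1 + Lc")
      case True
      hence "K = Ls - 1" unfolding K_def by simp
      thus ?thesis unfolding Delta_formula_def using True Ls1 Ls by (simp add: field_simps)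
    next
      case False
      hence "K = Lc" unfolding K_def by simp
      thus ?thesis unfolding Delta_formula_def using False Ls1 Lc by (simp add: field_simps)
    qed
    ultimately show ?thesis using e by simp
  qed
qed

lemma ex_att:
  fixes Ls Lc :: real
  assumes Lc: "Lc > 0" and Ls: "Ls > 0"
  shows "\<exists>r>0. ex Ls Lc r = Delta_formula Ls Lc"
proof -
  consider (a) "Ls < 1" | (b) "Ls = 1" | (c) "1 < Ls" "Ls \<le> 1 + Lc" | (d) "Ls > 1 + Lc" by linarith
  thus ?thesis
  proof cases
    case a
    define D where "D = Lc + 1 - Ls"
    have D: "D > 0" unfolding D_def using Lc a by linarith
    define rs where "rs = Lc / D"
    have rs: "rs > 0" "rs < 1" unfolding rs_def D_def using Lc a by (auto simp: field_simps)
    have m1: "min Ls 1 = Ls" "min Ls (1 + Lc) = Ls" using a Lc by auto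
    have e1: "rs + Ls * (1 - rs) = Ls + Lc * (1 - Ls) / D" unfolding rs_def using D by (simp add: field_simps)
    have e2: "Ls + Lc * (1 - rs) = Ls + Lc * (1 - Ls) / D" unfolding rs_def D_def using D[unfolded D_def]
      by (simp add: field_simps)
    have "ex Ls Lc rs = Ls + Lc * (1 - Ls) / D"
      unfolding ex_def exA_def exB_def using rs m1 e1 e2 by (simp add: algebra_simps)
    also have "\<dots> = Delta_formula Ls Lc" unfolding D_def using Delta_le1[OF Lc Ls] a by simp
    finally show ?thesis using rs by blast
  next
    case b
    have "ex Ls Lc 1 = 1" unfolding ex_def exA_def exB_def using b by simp
    moreover have "Delta_formula Ls Lc = 1" unfolding Delta_formula_def using b by simp
    ultimately show ?thesis by (intro exI[of _ 1]) simp
  next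
    case c
    define rs where "rs = 2 - 1 / Ls"
    have rs: "rs \<ge> 1" "rs \<le> 2" unfolding rs_def using c by (auto simp: field_simps)
    have K: "min (Ls - 1) Lc = Ls - 1" using c by simp
    have e: "1 + (Ls - 1) * (2 - rs) = rs" unfolding rs_def using c by (simp add: field_simps)
    have "ex Ls Lc rs = rs" unfolding ex_def exA_def exB_def using rs c K e by simp
    moreover have "Delta_formula Ls Lc = rs" unfolding Delta_formula_def rs_def using c by simp
    ultimately show ?thesis using rs by (intro exI[of _ rs]) simp
  next
    case d
    define rs where "rs = 1 + Lc / (Lc + 1)"
    have rs: "rs \<ge> 1" "rs \<le> 2" unfolding rs_def using Lc by (auto simp: field_simps)
    have K: "min (Ls - 1) Lc = Lc" using d by simp
    have e: "1 + Lc * (2 - rs) = rs" unfolding rs_def using Lc by (simp add: field_simps)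
    have "ex Ls Lc rs = rs" unfolding ex_def exA_def exB_def using rs d K e Lc by simp
    moreover have "Delta_formula Ls Lc = rs" unfolding Delta_formula_def rs_def using d Lc by simp
    ultimately show ?thesis using rs by (intro exI[of _ rs]) simp
  qed
qed

theorem lemma9:
  fixes Ls Lc :: real
  assumes "Lc > 0" and "Ls > 0"
  shows "(\<forall>rj>0. \<exists>l. ((\<lambda>\<rho>. - ln (ED_j Ls Lc (rj / 2 * log 2 \<rho>) \<rho>) / ln \<rho>) \<longlongrightarrow> l) at_top)
    \<and> (SUP rj\<in>{0<..}. ereal (Lim at_top (\<lambda>\<rho>. - ln (ED_j Ls Lc (rj / 2 * log 2 \<rho>) \<rho>) / ln \<rho>)))
        = ereal (Delta_formula Ls Lc)"
proof -
  have L: "Lim at_top (\<lambda>\<rho>. - ln (ED_j Ls Lc (rj / 2 * log 2 \<rho>) \<rho>) / ln \<rho>) = ex Ls Lc rj" if "rj > 0" for rj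
    using tendsto_Lim[OF trivial_limit_at_top_linorder lim_ex[OF assms that]] by simp
  have part1: "\<forall>rj>0. \<exists>l. ((\<lambda>\<rho>. - ln (ED_j Ls Lc (rj / 2 * log 2 \<rho>) \<rho>) / ln \<rho>) \<longlongrightarrow> l) at_top"
    using lim_ex[OF assms] by blast
  have "(SUP rj\<in>{0<..}. ereal (Lim at_top (\<lambda>\<rho>. - ln (ED_j Ls Lc (rj / 2 * log 2 \<rho>) \<rho>) / ln \<rho>)))
      = (SUP rj\<in>{0<..}. ereal (ex Ls Lc rj))"
    using L by (intro SUP_cong) auto
  also have "\<dots> = ereal (Delta_formula Ls Lc)"
  proof (rule antisym)
    show "(SUP rj\<in>{0<..}. ereal (ex Ls Lc rj)) \<le> ereal (Delta_formula Ls Lc)"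
      using ex_le[OF assms] by (intro SUP_least) auto
    obtain rs where rs: "rs > 0" "ex Ls Lc rs = Delta_formula Ls Lc" using ex_att[OF assms] by blast
    show "ereal (Delta_formula Ls Lc) \<le> (SUP rj\<in>{0<..}. ereal (ex Ls Lc rj))"
      using rs by (intro SUP_upper2[of rs]) auto
  qed
  finally show ?thesis using part1 by blast
qed


end
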